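(* Let $X$ be a locally compact space such that the closure of every quasi-compact subspace is quasi-compact. Then (a) the identity map $\mathcal{H}'X\to\mathcal{H}X$ is a homeomorphism; (b) for every compact subspace $K\subset X$ there exists $C_K>0$ such that for all $S\in\mathcal{H}X$, $S\cap K\neq\emptyset$ implies $\#S\le C_K$. (c) Moreover, if $G$ is a locally compact proper groupoid with $G^{(0)}$ Hausdorff, then the closure in $G$ of every quasi-compact subspace of $G$ is quasi-compact (so (a) and (b) hold for $X=G$).
   Context: Quasi-compact: every open cover has a finite subcover; compact: quasi-compact Hausdorff; locally compact: every point has a compact neighbourhood (not necessarily Hausdorff). $\mathcal{H}X$ is the set of nonempty $S\subset X$ such that for every finite family $(V_i)$ of open sets with $S\cap V_i\neq\emptyset$ for all $i$, $\bigcap_iV_i\neq\emptyset$; its topology is generated by the sets $\Omega_V=\{S: S\cap V\ne\emptyset\}$ ($V$ open) and $\Omega^Q=\{S:S\cap Q=\emptyset\}$ ($Q$ quasi-compact). $\mathcal{H}'X$ is the set $\mathcal{H}X$ with the coarsest topology making the identity $\mathcal{H}'X\to\mathcal{H}X$ continuous and making $\Omega'_V=\{S\in\mathcal{H}X: S\subset V\}$ open for every relatively quasi-compact open $V\subset X$. $\#S$ is the cardinality. A groupoid $G$ is proper if $(r,s)\colon G\to G^{(0)}\times G^{(0)}$ is closed with quasi-compact fibres. *)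

theory Defs
  imports "HOL-Analysis.Analysis"
begin

text \<open>Conventions: quasi-compact = compactin (no separation axiom); compact = quasi-compact
  and Hausdorff (as a subspace).\<close>

definition qcompact :: "'a topology \<Rightarrow> 'a set \<Rightarrow> bool" where
  "qcompact X K \<longleftrightarrow> compactin X K"

definition hcompact :: "'a topology \<Rightarrow> 'a set \<Rightarrow> bool" where
  "hcompact X K \<longleftrightarrow> compactin X K \<and> Hausdorff_space (subtopology X K)"

definition loc_compact :: "'a topology \<Rightarrow> bool" where
  "loc_compact X \<longleftrightarrow> (\<forall>x\<in>topspace X. \<exists>U K. openin X U \<and> x \<in> U \<and> U \<subseteq> K \<and> hcompact X K)"

definition rel_qcompact :: "'a topology \<Rightarrow> 'a set \<Rightarrow> bool" where
  "rel_qcompact X V \<longleftrightarrow> V \<subseteq> topspace X \<and> compactin X (X closure_of V)"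

definition HSet :: "'a topology \<Rightarrow> 'a set set" where
  "HSet X = {S. S \<subseteq> topspace X \<and> S \<noteq> {} \<and>
      (\<forall>\<V>. finite \<V> \<longrightarrow> (\<forall>V\<in>\<V>. openin X V \<and> S \<inter> V \<noteq> {}) \<longrightarrow>
            topspace X \<inter> \<Inter>\<V> \<noteq> {})}"

definition Omega :: "'a topology \<Rightarrow> 'a set \<Rightarrow> 'a set set" where
  "Omega X V = {S \<in> HSet X. S \<inter> V \<noteq> {}}"

definition OmegaQ :: "'a topology \<Rightarrow> 'a set \<Rightarrow> 'a set set" where
  "OmegaQ X Q = {S \<in> HSet X. S \<inter> Q = {}}"

definition OmegaPrime :: "'a topology \<Rightarrow> 'a set \<Rightarrow> 'a set set" where
  "OmegaPrime X V = {S \<in> HSet X. S \<subseteq> V}"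

text \<open>Topology of \<open>\<H>X\<close>: generated by the \<open>\<Omega>_V\<close> (V open) and the \<open>\<Omega>^Q\<close> (Q quasi-compact).
  (\<open>HSet X\<close> itself is included so the underlying set is exactly \<open>HSet X\<close>; it equals
  \<open>\<Omega>_{X}\<close> anyway.)\<close>
definition HTop :: "'a topology \<Rightarrow> 'a set topology" where
  "HTop X = topology_generated_by
     ({HSet X} \<union> {Omega X V | V. openin X V} \<union> {OmegaQ X Q | Q. compactin X Q})"

definition HTop' :: "'a topology \<Rightarrow> 'a set topology" where
  "HTop' X = topology_generated_by
     ({HSet X} \<union> {U. openin (HTop X) U} \<union> {OmegaPrime X V | V. openin X V \<and> rel_qcompact X V})"

text \<open>Topological groupoid: arrows are the points of \<open>G\<close>; the unit space \<open>U = G^{(0)}\<close> is a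
  subset of the arrows with the subspace topology; \<open>r, s\<close> range, source; \<open>m\<close> multiplication
  defined on composable pairs \<open>s g = r h\<close>; \<open>i\<close> inverse.\<close>
definition topological_groupoid ::
  "'a topology \<Rightarrow> 'a set \<Rightarrow> ('a \<Rightarrow> 'a) \<Rightarrow> ('a \<Rightarrow> 'a) \<Rightarrow> ('a \<Rightarrow> 'a \<Rightarrow> 'a) \<Rightarrow> ('a \<Rightarrow> 'a) \<Rightarrow> bool" where
  "topological_groupoid G U r s m i \<longleftrightarrow>
     U \<subseteq> topspace G \<and>
     (\<forall>g\<in>topspace G. r g \<in> U \<and> s g \<in> U \<and> i g \<in> topspace G) \<and>
     (\<forall>u\<in>U. r u = u \<and> s u = u) \<and>
     (\<forall>g\<in>topspace G. \<forall>h\<in>topspace G. s g = r h \<longrightarrow>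
          m g h \<in> topspace G \<and> r (m g h) = r g \<and> s (m g h) = s h) \<and>
     (\<forall>g\<in>topspace G. \<forall>h\<in>topspace G. \<forall>k\<in>topspace G. s g = r h \<longrightarrow> s h = r k \<longrightarrow>
          m (m g h) k = m g (m h k)) \<and>
     (\<forall>g\<in>topspace G. m (r g) g = g \<and> m g (s g) = g) \<and>
     (\<forall>g\<in>topspace G. r (i g) = s g \<and> s (i g) = r g \<and> m g (i g) = r g \<and> m (i g) g = s g) \<and>
     continuous_map G (subtopology G U) r \<and>
     continuous_map G (subtopology G U) s \<and>
     continuous_map G G i \<and>
     continuous_map
       (subtopology (prod_topology G G) {(g, h). g \<in> topspace G \<and> h \<in> topspace G \<and> s g = r h})
       G (\<lambda>(g, h). m g h)"

definition proper_groupoid ::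
  "'a topology \<Rightarrow> 'a set \<Rightarrow> ('a \<Rightarrow> 'a) \<Rightarrow> ('a \<Rightarrow> 'a) \<Rightarrow> bool" where
  "proper_groupoid G U r s \<longleftrightarrow>
     closed_map G (prod_topology (subtopology G U) (subtopology G U)) (\<lambda>g. (r g, s g)) \<and>
     (\<forall>x\<in>U. \<forall>y\<in>U. compactin G {g \<in> topspace G. r g = x \<and> s g = y})"

end

theory Submission
  imports Defs
begin

lemma HSet_D:
  assumes "S \<in> HSet X" "finite \<V>" "\<forall>V\<in>\<V>. openin X V \<and> S \<inter> V \<noteq> {}"
  shows "topspace X \<inter> \<Inter>\<V> \<noteq> {}"
proof -
  have "\<forall>\<V>. finite \<V> \<longrightarrow> (\<forall>V\<in>\<V>. openin X V \<and> S \<inter> V \<noteq> {}) \<longrightarrow>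
            topspace X \<inter> \<Inter>\<V> \<noteq> {}" using assms(1) unfolding HSet_def mem_Collect_eq by (elim conjE)
  then show ?thesis using assms(2,3) by (elim allE[of _ \<V>] impE)
qed

lemma HSet_ne: "S \<in> HSet X \<Longrightarrow> S \<noteq> {}"
  unfolding HSet_def mem_Collect_eq by (elim conjE)

lemma HSet_sub: "S \<in> HSet X \<Longrightarrow> S \<subseteq> topspace X"
  unfolding HSet_def mem_Collect_eq by (elim conjE)

lemma hset_closure:
  assumes "S \<in> HSet X" "x \<in> S" "y \<in> S" "openin X W" "x \<in> W"
  shows "y \<in> X closure_of W"
proof -
  have yt: "y \<in> topspace X" using assms(1,3) HSet_sub by auto
  have "\<exists>z. z \<in> W \<and> z \<in> T" if "y \<in> T" "openin X T" for T
  proof -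
    have "topspace X \<inter> \<Inter>{W, T} \<noteq> {}"
      using HSet_D[OF assms(1), of "{W,T}"] assms that by auto
    then show ?thesis by auto
  qed
  then show ?thesis using yt by (auto simp: in_closure_of)
qed

lemma topspace_HTop: "topspace (HTop X) = HSet X"
  unfolding HTop_def Omega_def OmegaQ_def by auto

lemma OmegaPrime_open:
  assumes "openin X V" "rel_qcompact X V"
  shows "openin (HTop X) (OmegaPrime X V)"
proof -
  let ?Q = "X closure_of V - V"
  have cQ: "compactin X ?Q"
  proof (rule closed_compactin[of X "X closure_of V"])
    show "compactin X (X closure_of V)" using assms unfolding rel_qcompact_def by blast
    show "X closure_of V - V \<subseteq> X closure_of V" by blast
    show "closedin X (X closure_of V - V)" using assms(1) by (simp add: closedin_diff)
  qed
  have eq: "OmegaPrime X V = Omega X V \<inter> OmegaQ X ?Q"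
  proof
    show "OmegaPrime X V \<subseteq> Omega X V \<inter> OmegaQ X ?Q"
      unfolding OmegaPrime_def Omega_def OmegaQ_def using HSet_ne by blast
  next
    show "Omega X V \<inter> OmegaQ X ?Q \<subseteq> OmegaPrime X V"
    proof
      fix S assume S: "S \<in> Omega X V \<inter> OmegaQ X ?Q"
      then obtain x where x: "x \<in> S" "x \<in> V" unfolding Omega_def by auto
      have "S \<subseteq> V"
      proof
        fix y assume "y \<in> S"
        then have "y \<in> X closure_of V"
          using hset_closure[of S X x y V] S x assms(1) unfolding Omega_def by auto
        then show "y \<in> V" using S \<open>y \<in> S\<close> unfolding OmegaQ_def by auto
      qed
      then show "S \<in> OmegaPrime X V" using S unfolding OmegaPrime_def Omega_def by auto
    qed
  qed
  show ?thesis unfolding eq HTop_def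
    apply (rule openin_Int)
    apply (rule topology_generated_by_Basis) using assms(1) apply blast
    apply (rule topology_generated_by_Basis) using cQ apply blast
    done
qed

lemma HTop'_eq: "HTop' X = HTop X"
proof (rule topology_eq[THEN iffD2], intro allI iffI)
  fix s assume "openin (HTop' X) s"
  then have g: "generate_topology_on
     ({HSet X} \<union> {U. openin (HTop X) U} \<union> {OmegaPrime X V | V. openin X V \<and> rel_qcompact X V}) s"
    unfolding HTop'_def by (rule openin_topology_generated_by)
  have hs: "openin (HTop X) (HSet X)" using openin_topspace[of "HTop X"] unfolding topspace_HTop .
  show "openin (HTop X) s"
    apply (rule generate_topology_on_coarsest[OF _ _ g])
     apply (simp add: istopology_openin)
    using OmegaPrime_open hs by auto
next
  fix s assume "openin (HTop X) s"
  then show "openin (HTop' X) s" unfolding HTop'_def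
    by (intro topology_generated_by_Basis) blast
qed


lemma compact_cover_pts:
  assumes "compactin X T" "\<forall>x\<in>T. openin X (W x) \<and> x \<in> W x"
  shows "\<exists>A. finite A \<and> A \<subseteq> T \<and> T \<subseteq> \<Union>(W ` A)"
proof -
  have "\<exists>F. finite F \<and> F \<subseteq> W ` T \<and> T \<subseteq> \<Union>F"
  proof -
    have "(\<forall>Y\<in>W ` T. openin X Y) \<and> T \<subseteq> \<Union>(W ` T)" using assms(2) by blast
    then show ?thesis using assms(1) unfolding compactin_def by blast
  qed
  then obtain F where F: "finite F" "F \<subseteq> W ` T" "T \<subseteq> \<Union>F" by blast
  then obtain A where "A \<subseteq> T" "finite A" "F = W ` A" using finite_subset_image[OF F(1) F(2)] by blast
  then show ?thesis using F by blast
qed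

lemma one_point:
  assumes S: "S \<in> HSet X" and W: "openin X W" "W \<subseteq> L" and H: "Hausdorff_space (subtopology X L)"
    and z: "z \<in> S" "z \<in> W" and z': "z' \<in> S" "z' \<in> W"
  shows "z = z'"
proof (rule ccontr)
  assume ne: "z \<noteq> z'"
  have "z \<in> topspace (subtopology X L)" "z' \<in> topspace (subtopology X L)"
    using z z' W HSet_sub[OF S] by auto
  then obtain U V where UV: "openin (subtopology X L) U" "openin (subtopology X L) V" "z \<in> U" "z' \<in> V" "disjnt U V"
    using H ne unfolding Hausdorff_space_def by metis
  then obtain T1 T2 where T: "openin X T1" "openin X T2" "U = T1 \<inter> L" "V = T2 \<inter> L"
    by (auto simp: openin_subtopology)
  have "topspace X \<inter> \<Inter>{T1 \<inter> W, T2 \<inter> W} \<noteq> {}"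
    using HSet_D[OF S, of "{T1 \<inter> W, T2 \<inter> W}"] T W UV z z' by auto
  then show False using UV T W unfolding disjnt_def by auto
qed

lemma card_bound:
  assumes S: "S \<in> HSet X" and A: "finite A"
    and WL: "\<forall>y\<in>A. openin X (W y) \<and> W y \<subseteq> L y \<and> hcompact X (L y)"
    and cov: "S \<subseteq> \<Union>(W ` A)"
  shows "finite S \<and> card S \<le> card A"
proof -
  obtain f where f: "\<forall>x\<in>S. f x \<in> A \<and> x \<in> W (f x)" using cov by (metis UN_E subsetD)
  have inj: "inj_on f S"
  proof (rule inj_onI)
    fix x y assume "x \<in> S" "y \<in> S" "f x = f y"
    then show "x = y" using one_point[OF S, of "W (f x)" "L (f x)" x y] f WL
      unfolding hcompact_def by metis
  qed
  have im: "f ` S \<subseteq> A" using f by auto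
  have "finite S" using inj im A finite_imageD finite_subset by metis
  moreover have "card S \<le> card A" using card_inj_on_le[OF inj im A] .
  ultimately show ?thesis by simp
qed

lemma part_b:
  assumes lc: "loc_compact X" and cl: "\<forall>K. qcompact X K \<longrightarrow> qcompact X (X closure_of K)"
    and K: "hcompact X K"
  shows "\<exists>C::nat. C > 0 \<and> (\<forall>S\<in>HSet X. S \<inter> K \<noteq> {} \<longrightarrow> finite S \<and> card S \<le> C)"
proof -
  have ex: "\<exists>U K. openin X U \<and> x \<in> U \<and> U \<subseteq> K \<and> hcompact X K" if "x \<in> topspace X" for x
    using lc that unfolding loc_compact_def by (elim ballE) auto
  define W where "W x = (SOME U. \<exists>K. openin X U \<and> x \<in> U \<and> U \<subseteq> K \<and> hcompact X K)" for x
  define L where "L x = (SOME K. openin X (W x) \<and> x \<in> W x \<and> W x \<subseteq> K \<and> hcompact X K)" for x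
  have WL: "openin X (W x) \<and> x \<in> W x \<and> W x \<subseteq> L x \<and> hcompact X (L x)" if x: "x \<in> topspace X" for x
  proof -
    have "\<exists>K. openin X (W x) \<and> x \<in> W x \<and> W x \<subseteq> K \<and> hcompact X K"
      unfolding W_def by (rule someI_ex[OF ex[OF x]])
    then show ?thesis unfolding L_def by (rule someI_ex)
  qed
  have Kc: "compactin X K" using K by (simp add: hcompact_def)
  then have Ksub: "K \<subseteq> topspace X" by (rule compactin_subset_topspace)
  have "\<forall>x\<in>K. openin X (W x) \<and> x \<in> W x" using WL Ksub by (simp add: subset_iff)
  then have "\<exists>B. finite B \<and> B \<subseteq> K \<and> K \<subseteq> \<Union>(W ` B)" by (rule compact_cover_pts[OF Kc])
  then obtain B where B: "finite B" "B \<subseteq> K" "K \<subseteq> \<Union>(W ` B)" by (elim exE conjE)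
  have clc: "compactin X (X closure_of W b)" if "b \<in> topspace X" for b
  proof -
    have "compactin X (L b)" using WL[OF that] by (simp add: hcompact_def)
    then have c1: "compactin X (X closure_of L b)" using cl by (simp add: qcompact_def)
    have c2: "X closure_of W b \<subseteq> X closure_of L b" using WL[OF that] by (simp add: closure_of_mono)
    show ?thesis by (rule closed_compactin[OF c1 c2 closedin_closure_of])
  qed
  have exA: "\<exists>A. finite A \<and> A \<subseteq> X closure_of W b \<and> X closure_of W b \<subseteq> \<Union>(W ` A)" if b: "b \<in> B" for b
  proof -
    have bt: "b \<in> topspace X" using b B(2) Ksub by (simp add: subset_iff)
    have "\<forall>x\<in>X closure_of W b. openin X (W x) \<and> x \<in> W x"
      using WL closure_of_subset_topspace[of X "W b"] by (simp add: subset_iff)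
    then show ?thesis by (rule compact_cover_pts[OF clc[OF bt]])
  qed
  define A where "A b = (SOME A. finite A \<and> A \<subseteq> X closure_of W b \<and> X closure_of W b \<subseteq> \<Union>(W ` A))" for b
  have A: "finite (A b) \<and> A b \<subseteq> X closure_of W b \<and> X closure_of W b \<subseteq> \<Union>(W ` A b)" if "b \<in> B" for b
    unfolding A_def by (rule someI_ex[OF exA[OF that]])
  define C where "C = Suc (\<Sum>b\<in>B. card (A b))"
  have main: "finite S \<and> card S \<le> C" if S: "S \<in> HSet X" "S \<inter> K \<noteq> {}" for S
  proof -
    obtain x where x: "x \<in> S" "x \<in> K" using S(2) by auto
    then obtain b where b: "b \<in> B" "x \<in> W b" using B(3) by auto
    have bt: "b \<in> topspace X" using b B(2) Ksub by (simp add: subset_iff)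
    have Ab: "finite (A b)" "A b \<subseteq> X closure_of W b" "X closure_of W b \<subseteq> \<Union>(W ` A b)"
      using A[OF b(1)] by auto
    have "S \<subseteq> X closure_of W b"
    proof
      fix y assume "y \<in> S"
      then show "y \<in> X closure_of W b"
        using hset_closure[OF S(1) x(1) _ _ b(2)] WL[OF bt] by simp
    qed
    then have cov: "S \<subseteq> \<Union>(W ` A b)" using Ab(3) by (rule subset_trans)
    have Atop: "A b \<subseteq> topspace X" using Ab(2) closure_of_subset_topspace[of X "W b"] by (rule subset_trans)
    have WLA: "\<forall>y\<in>A b. openin X (W y) \<and> W y \<subseteq> L y \<and> hcompact X (L y)"
      using WL Atop by (simp add: subset_iff)
    have fc: "finite S \<and> card S \<le> card (A b)"
      by (rule card_bound[OF S(1) Ab(1) WLA cov])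
    moreover have "card (A b) \<le> (\<Sum>b\<in>B. card (A b))"
      by (rule member_le_sum[OF b(1) _ B(1)]) simp
    ultimately show "finite S \<and> card S \<le> C" unfolding C_def by simp
  qed
  show ?thesis
    using main unfolding C_def by blast
qed

lemma part_c:
  assumes T: "topological_groupoid G U r s m i" and P: "proper_groupoid G U r s"
    and H: "Hausdorff_space (subtopology G U)" and K: "compactin G K"
  shows "compactin G (G closure_of K)"
proof -
  let ?Y = "subtopology G U"
  have cr: "continuous_map G ?Y r" and cs: "continuous_map G ?Y s"
    using T unfolding topological_groupoid_def by blast+
  have pm: "proper_map G (prod_topology ?Y ?Y) (\<lambda>g. (r g, s g))"
    using P unfolding proper_groupoid_def proper_map_def
    by (auto simp: topspace_subtopology)
  have crs: "continuous_map G (prod_topology ?Y ?Y) (\<lambda>g. (r g, s g))"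
    using cr cs by (simp add: continuous_map_paired)
  have k1: "compactin ?Y (r ` K)" using image_compactin[OF K cr] .
  have k2: "compactin ?Y (s ` K)" using image_compactin[OF K cs] .
  have kp: "compactin (prod_topology ?Y ?Y) (r ` K \<times> s ` K)"
    using k1 k2 compactin_Times by blast
  have hp: "Hausdorff_space (prod_topology ?Y ?Y)"
    using H Hausdorff_space_prod_topology by blast
  have clp: "closedin (prod_topology ?Y ?Y) (r ` K \<times> s ` K)"
    using compactin_imp_closedin[OF hp kp] .
  let ?P = "{x \<in> topspace G. (r x, s x) \<in> r ` K \<times> s ` K}"
  have Pc: "closedin G ?P" using closedin_continuous_map_preimage[OF crs clp] .
  have Pk: "compactin G ?P" using pm kp unfolding proper_map_alt by blast
  have "K \<subseteq> ?P" using K compactin_subset_topspace by blast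
  then have "G closure_of K \<subseteq> ?P" using Pc closure_of_minimal by blast
  then show ?thesis using closed_compactin[OF Pk] closedin_closure_of by blast
qed

theorem proposition3p12:
  shows
   "(\<forall>X :: 'a topology.
       loc_compact X \<and> (\<forall>K. qcompact X K \<longrightarrow> qcompact X (X closure_of K)) \<longrightarrow>
         homeomorphic_map (HTop' X) (HTop X) id \<and>
         (\<forall>K. hcompact X K \<longrightarrow>
            (\<exists>C::nat. C > 0 \<and>
               (\<forall>S\<in>HSet X. S \<inter> K \<noteq> {} \<longrightarrow> finite S \<and> card S \<le> C)))) \<and>
    (\<forall>(G :: 'b topology) U r s m i.
       topological_groupoid G U r s m i \<and> loc_compact G \<and> proper_groupoid G U r s \<and>
       Hausdorff_space (subtopology G U) \<longrightarrow>
         (\<forall>K. qcompact G K \<longrightarrow> qcompact G (G closure_of K)))"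
proof (intro conjI allI impI)
  fix X :: "'a topology"
  show "homeomorphic_map (HTop' X) (HTop X) id" by (simp add: HTop'_eq)
next
  fix X :: "'a topology" and K
  assume "loc_compact X \<and> (\<forall>K. qcompact X K \<longrightarrow> qcompact X (X closure_of K))" "hcompact X K"
  then show "\<exists>C::nat. C > 0 \<and> (\<forall>S\<in>HSet X. S \<inter> K \<noteq> {} \<longrightarrow> finite S \<and> card S \<le> C)"
    using part_b by blast
next
  fix G :: "'b topology" and U r s m i K
  assume "topological_groupoid G U r s m i \<and> loc_compact G \<and> proper_groupoid G U r s \<and>
       Hausdorff_space (subtopology G U)" "qcompact G K"
  then show "qcompact G (G closure_of K)" using part_c unfolding qcompact_def by blast
qed

end
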